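(* $\mathcal{T}+\mathrm{IND}(\mathrm{Literal}(\mathcal{T}))\equiv\mathcal{T}+\mathrm{IND}(\mathrm{Open}(\mathcal{T}))$, i.e. each of the two theories derives all axioms of the other.
   Context: Language $\{0/0,s/1,p/1,+/2\}$; $\mathcal{T}$ has axioms (universally closed) $0\neq s(x)$, $p(0)=0$, $p(s(x))=x$, $x+0=x$, $x+s(y)=s(x+y)$. $\mathrm{Literal}(\mathcal{T})$ is the set of literals and $\mathrm{Open}(\mathcal{T})$ the set of quantifier-free formulas of this language. $I_x\varphi=\forall\vec z(\varphi(0,\vec z)\wedge\forall x(\varphi(x,\vec z)\to\varphi(s(x),\vec z))\to\forall x\varphi(x,\vec z))$ and $\mathrm{IND}(\Gamma)=\{I_x\gamma:\gamma\in\Gamma\}$. *)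

theory Defs
  imports Main
begin

datatype tm = Var nat | Zero | S tm | P tm | Plus tm tm

datatype fm = Eq tm tm | Neg fm | Conj fm fm | Disj fm fm | Imp fm fm
  | All nat fm | Ex nat fm

inductive is_literal :: "fm \<Rightarrow> bool" where
  "is_literal (Eq t u)"
| "is_literal (Neg (Eq t u))"

fun is_open :: "fm \<Rightarrow> bool" where
  "is_open (Eq t u) = True"
| "is_open (Neg f) = is_open f"
| "is_open (Conj f g) = (is_open f \<and> is_open g)"
| "is_open (Disj f g) = (is_open f \<and> is_open g)"
| "is_open (Imp f g) = (is_open f \<and> is_open g)"
| "is_open (All x f) = False"
| "is_open (Ex x f) = False"

definition Literal :: "fm set" where "Literal = {f. is_literal f}"
definition Open :: "fm set" where "Open = {f. is_open f}"

section \<open>Substitution (only used with terms whose variables are at most x,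
  so replacing free occurrences of x is capture-free)\<close>

fun subst_tm :: "nat \<Rightarrow> tm \<Rightarrow> tm \<Rightarrow> tm" where
  "subst_tm x s (Var y) = (if y = x then s else Var y)"
| "subst_tm x s Zero = Zero"
| "subst_tm x s (S t) = S (subst_tm x s t)"
| "subst_tm x s (P t) = P (subst_tm x s t)"
| "subst_tm x s (Plus t u) = Plus (subst_tm x s t) (subst_tm x s u)"

fun subst :: "nat \<Rightarrow> tm \<Rightarrow> fm \<Rightarrow> fm" where
  "subst x s (Eq t u) = Eq (subst_tm x s t) (subst_tm x s u)"
| "subst x s (Neg f) = Neg (subst x s f)"
| "subst x s (Conj f g) = Conj (subst x s f) (subst x s g)"
| "subst x s (Disj f g) = Disj (subst x s f) (subst x s g)"
| "subst x s (Imp f g) = Imp (subst x s f) (subst x s g)"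
| "subst x s (All y f) = (if y = x then All y f else All y (subst x s f))"
| "subst x s (Ex y f) = (if y = x then Ex y f else Ex y (subst x s f))"

record 'a struct =
  zero :: 'a
  suc :: "'a \<Rightarrow> 'a"
  pre :: "'a \<Rightarrow> 'a"
  add :: "'a \<Rightarrow> 'a \<Rightarrow> 'a"

fun eval :: "'a struct \<Rightarrow> (nat \<Rightarrow> 'a) \<Rightarrow> tm \<Rightarrow> 'a" where
  "eval M e (Var x) = e x"
| "eval M e Zero = zero M"
| "eval M e (S t) = suc M (eval M e t)"
| "eval M e (P t) = pre M (eval M e t)"
| "eval M e (Plus t u) = add M (eval M e t) (eval M e u)"

fun sat :: "'a struct \<Rightarrow> (nat \<Rightarrow> 'a) \<Rightarrow> fm \<Rightarrow> bool" where
  "sat M e (Eq t u) = (eval M e t = eval M e u)"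
| "sat M e (Neg f) = (\<not> sat M e f)"
| "sat M e (Conj f g) = (sat M e f \<and> sat M e g)"
| "sat M e (Disj f g) = (sat M e f \<or> sat M e g)"
| "sat M e (Imp f g) = (sat M e f \<longrightarrow> sat M e g)"
| "sat M e (All x f) = (\<forall>a. sat M (e(x := a)) f)"
| "sat M e (Ex x f) = (\<exists>a. sat M (e(x := a)) f)"

text \<open>Axioms are read universally closed: a structure satisfies a formula
  iff it holds under every assignment.\<close>
definition valid_in :: "'a struct \<Rightarrow> fm \<Rightarrow> bool" where
  "valid_in M f = (\<forall>e. sat M e f)"

definition is_model :: "'a struct \<Rightarrow> fm set \<Rightarrow> bool" where
  "is_model M A = (\<forall>f\<in>A. valid_in M f)"

text \<open>Semantic consequence over structures with carrier 'a; a theorem stated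
  for a free type variable 'a holds for all carriers, i.e. it expresses
  full first-order semantic consequence (= derivability, by completeness).\<close>
definition entails :: "'a itself \<Rightarrow> fm set \<Rightarrow> fm \<Rightarrow> bool" where
  "entails _ A f = (\<forall>M :: 'a struct. is_model M A \<longrightarrow> valid_in M f)"

definition T :: "fm set" where
  "T = { Neg (Eq Zero (S (Var 0))),
         Eq (P Zero) Zero,
         Eq (P (S (Var 0))) (Var 0),
         Eq (Plus (Var 0) Zero) (Var 0),
         Eq (Plus (Var 0) (S (Var 1))) (S (Plus (Var 0) (Var 1))) }"

text \<open>I_x phi; the outer universal closure over the parameters is implicit
  in valid_in.\<close>
definition Ind :: "nat \<Rightarrow> fm \<Rightarrow> fm" where
  "Ind x f = Imp (Conj (subst x Zero f) (All x (Imp f (subst x (S (Var x)) f))))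
                 (All x f)"

definition IND :: "fm set \<Rightarrow> fm set" where
  "IND G = {Ind x g | x g. g \<in> G}"

end

theory Submission
  imports Defs
begin

lemma eval_subst_tm: "eval M e (subst_tm x s t) = eval M (e(x := eval M e s)) t"
  by (induction t) auto

lemma sat_subst: "is_open f \<Longrightarrow> sat M e (subst x s f) = sat M (e(x := eval M e s)) f"
  by (induction f) (auto simp: eval_subst_tm)

primrec mulk :: "'a struct \<Rightarrow> nat \<Rightarrow> 'a \<Rightarrow> 'a" where
  "mulk M 0 y = zero M"
| "mulk M (Suc k) y = add M (mulk M k y) y"

lemma bool_seq: "(\<forall>(j::nat) j'. j < j' \<longrightarrow> B j = v \<or> B j' = v) \<Longrightarrow> \<exists>J. \<forall>j\<ge>J. B j = v"
proof (cases "\<exists>j0. B j0 \<noteq> v")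
  case True
  then obtain j0 where "B j0 \<noteq> v" by blast
  moreover assume "\<forall>j j'. j < j' \<longrightarrow> B j = v \<or> B j' = v"
  ultimately have "\<forall>j\<ge>Suc j0. B j = v" by (metis Suc_le_eq)
  then show ?thesis by blast
qed auto

locale lm =
  fixes M :: "'a struct"
  assumes mdl: "is_model M (T \<union> IND Literal)"
begin

abbreviation "zr \<equiv> zero M"
abbreviation "sc \<equiv> suc M"
abbreviation "pr \<equiv> pre M"
abbreviation "ad \<equiv> add M"

lemma vT: "f \<in> T \<Longrightarrow> valid_in M f"
  using mdl unfolding is_model_def by auto

lemma ax1: "zr \<noteq> sc a"
  using vT[of "Neg (Eq Zero (S (Var 0)))", unfolded valid_in_def, rule_format, of "\<lambda>_. a"]
  by (simp add: T_def)
lemma ax2: "pr zr = zr"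
  using vT[of "Eq (P Zero) Zero", unfolded valid_in_def, rule_format, of "\<lambda>_. a"]
  by (simp add: T_def)
lemma ax3: "pr (sc a) = a"
  using vT[of "Eq (P (S (Var 0))) (Var 0)", unfolded valid_in_def, rule_format, of "\<lambda>_. a"]
  by (simp add: T_def)
lemma ax4: "ad a zr = a"
  using vT[of "Eq (Plus (Var 0) Zero) (Var 0)", unfolded valid_in_def, rule_format, of "\<lambda>_. a"]
  by (simp add: T_def)
lemma ax5: "ad a (sc b) = sc (ad a b)"
  using vT[of "Eq (Plus (Var 0) (S (Var 1))) (S (Plus (Var 0) (Var 1)))", unfolded valid_in_def,
      rule_format, of "\<lambda>i. if i = 0 then a else b"]
  by (simp add: T_def)

lemmas ax[simp] = ax2 ax3 ax4 ax5

lemma sc_inj[simp]: "(sc a = sc b) = (a = b)"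
  by (metis ax3)

lemma ind:
  assumes "is_literal g" "sat M (e(x:=zr)) g" "\<And>a. sat M (e(x:=a)) g \<Longrightarrow> sat M (e(x:=sc a)) g"
  shows "sat M (e(x:=b)) g"
proof -
  have "valid_in M (Ind x g)" using mdl assms(1) unfolding is_model_def IND_def Literal_def by auto
  then have "sat M e (Ind x g)" by (simp add: valid_in_def)
  moreover have "is_open g" using assms(1) by (cases rule: is_literal.cases) auto
  ultimately show ?thesis using assms(2,3) by (simp add: Ind_def sat_subst)
qed

lemma add0l[simp]: "ad zr a = a"
proof -
  have "sat M ((\<lambda>_. zr)(0:=a)) (Eq (Plus Zero (Var 0)) (Var 0))"
    by (rule ind) (auto intro: is_literal.intros)
  then show ?thesis by simp
qed

lemma addSl[simp]: "ad (sc b) a = sc (ad b a)"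
proof -
  have "sat M ((\<lambda>_. b)(0:=a)) (Eq (Plus (S (Var 1)) (Var 0)) (S (Plus (Var 1) (Var 0))))"
    by (rule ind) (auto intro: is_literal.intros)
  then show ?thesis by simp
qed

lemma comm: "ad a b = ad b a"
proof -
  have "sat M ((\<lambda>_. a)(1:=b)) (Eq (Plus (Var 0) (Var 1)) (Plus (Var 1) (Var 0)))"
    by (rule ind) (auto intro: is_literal.intros)
  then show ?thesis by simp
qed

lemma assoc: "ad (ad a b) c = ad a (ad b c)"
proof -
  have "sat M ((\<lambda>i. if i = 0 then a else b)(2:=c))
     (Eq (Plus (Plus (Var 0) (Var 1)) (Var 2)) (Plus (Var 0) (Plus (Var 1) (Var 2))))"
    by (rule ind) (auto intro: is_literal.intros)
  then show ?thesis by simp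
qed

lemma lcomm: "ad a (ad b c) = ad b (ad a c)"
  by (metis assoc comm)

lemmas add_ac = assoc comm lcomm

lemma ac3: "ad (ad a b) c = ad (ad a c) b"
  by (simp only: assoc comm lcomm)

lemma ac5: "ad (ad a b) c = ad b (ad a c)"
  by (simp only: assoc lcomm)

lemma ac4: "ad (ad a b) (ad c d) = ad (ad a c) (ad b d)"
  by (simp only: assoc lcomm)

lemma cancel: "a \<noteq> b \<Longrightarrow> ad a c \<noteq> ad b c"
proof -
  assume ab: "a \<noteq> b"
  have "sat M ((\<lambda>i. if i = 0 then a else b)(2:=c))
     (Neg (Eq (Plus (Var 0) (Var 2)) (Plus (Var 1) (Var 2))))"
    by (rule ind) (use ab in \<open>auto intro: is_literal.intros\<close>)
  then show ?thesis by simp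
qed

lemma cancel_l: "ad a b = ad a c \<Longrightarrow> b = c"
  by (metis cancel comm)

lemma nocyc: "a \<noteq> ad a (sc c)"
proof -
  have "sat M ((\<lambda>_. c)(0:=a)) (Neg (Eq (Var 0) (Plus (Var 0) (S (Var 1)))))"
    by (rule ind) (auto intro: is_literal.intros simp: ax1)
  then show ?thesis by simp
qed

lemma zs: "a = zr \<or> a = sc (pr a)"
proof (rule ccontr)
  assume h: "\<not> (a = zr \<or> a = sc (pr a))"
  have "sat M ((\<lambda>_. a)(0:=a)) (Neg (Eq (Var 0) (Var 1)))"
    by (rule ind) (use h in \<open>auto intro: is_literal.intros\<close>)
  then show False by simp
qed


abbreviation "mk \<equiv> mulk M"

lemma mul_add: "mk k (ad a b) = ad (mk k a) (mk k b)"
  by (induction k) (auto simp: add_ac)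

lemma mul_plus: "mk (k + l) y = ad (mk k y) (mk l y)"
  by (induction k) (auto simp: add_ac)

lemma sn: "(sc^^m) y = ad y ((sc^^m) zr)"
  by (induction m) auto

lemma lift:
  assumes "\<forall>y. f ((sc^^N) y) = ad (mk k y) c"
  shows "\<forall>y. f ((sc^^(N+m)) y) = ad (mk k y) (ad (mk k ((sc^^m) zr)) c)"
proof
  fix y
  have "(sc^^(N+m)) y = (sc^^N) ((sc^^m) y)" by (simp add: funpow_add)
  then have "f ((sc^^(N+m)) y) = ad (mk k ((sc^^m) y)) c" using assms by simp
  also have "\<dots> = ad (mk k y) (ad (mk k ((sc^^m) zr)) c)"
    by (subst sn) (simp add: mul_add add_ac)
  finally show "f ((sc^^(N+m)) y) = ad (mk k y) (ad (mk k ((sc^^m) zr)) c)" .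
qed

lemma nf: "\<exists>N k c. \<forall>y. eval M (e(x := (sc^^N) y)) t = ad (mk k y) c"
proof (induction t)
  case (Var v)
  show ?case
  proof (cases "v = x")
    case True
    show ?thesis by (rule exI[of _ 0], rule exI[of _ 1], rule exI[of _ zr]) (use True in simp)
  next
    case False
    show ?thesis by (rule exI[of _ 0], rule exI[of _ 0], rule exI[of _ "e v"]) (use False in simp)
  qed
next
  case Zero
  show ?case by (rule exI[of _ 0], rule exI[of _ 0], rule exI[of _ zr]) simp
next
  case (S t)
  then obtain N k c where h: "\<forall>y. eval M (e(x := (sc^^N) y)) t = ad (mk k y) c" by blast
  show ?case by (rule exI[of _ N], rule exI[of _ k], rule exI[of _ "sc c"]) (metis h ax5 eval.simps(3))
next
  case (P t)
  then obtain N k c where h: "\<forall>y. eval M (e(x := (sc^^N) y)) t = ad (mk k y) c" by blast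
  show ?case
  proof (cases k)
    case 0
    show ?thesis by (rule exI[of _ N], rule exI[of _ 0], rule exI[of _ "pr c"]) (metis h 0 add0l mulk.simps(1) eval.simps(4))
  next
    case (Suc k')
    have "eval M (e(x := (sc^^(Suc N)) y)) (P t) = ad (mk k y) (ad (mk k' (sc zr)) c)" for y
    proof -
      have F: "(sc^^(Suc N)) y = (sc^^N) (sc y)" by (simp only: funpow_Suc_right o_apply)
      have A: "eval M (e(x := (sc^^(Suc N)) y)) (P t) = pr (ad (mk k (sc y)) c)"
        unfolding F by (metis eval.simps(4) h)
      have B: "mk k (sc y) = sc (ad (mk k' (sc y)) y)" using Suc by simp
      have C: "mk k' (sc y) = ad (mk k' y) (mk k' (sc zr))" by (metis mul_add ax5 ax4)
      show ?thesis unfolding A B C using Suc by (simp add: add_ac)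
    qed
    then show ?thesis by blast
  qed
next
  case (Plus t u)
  from Plus.IH(1) obtain N1 k1 c1 where h1: "\<forall>y. eval M (e(x := (sc^^N1) y)) t = ad (mk k1 y) c1" by blast
  from Plus.IH(2) obtain N2 k2 c2 where h2: "\<forall>y. eval M (e(x := (sc^^N2) y)) u = ad (mk k2 y) c2" by blast
  note l1 = lift[where f="\<lambda>z. eval M (e(x:=z)) t", OF h1, of N2, rule_format]
  note l2 = lift[where f="\<lambda>z. eval M (e(x:=z)) u", OF h2, of N1, rule_format]
  show ?case
  proof (rule exI[of _ "N1+N2"], rule exI[of _ "k1+k2"],
      rule exI[of _ "ad (ad (mk k1 ((sc^^N2) zr)) c1) (ad (mk k2 ((sc^^N1) zr)) c2)"], rule allI)
    fix y
    have l2': "eval M (e(x := (sc^^(N1+N2)) y)) u = ad (mk k2 y) (ad (mk k2 ((sc ^^ N1) zr)) c2)"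
      using l2[of y] by (simp only: add.commute[of N2 N1])
    show "eval M (e(x := (sc^^(N1+N2)) y)) (Plus t u) =
      ad (mk (k1+k2) y) (ad (ad (mk k1 ((sc^^N2) zr)) c1) (ad (mk k2 ((sc^^N1) zr)) c2))"
      unfolding eval.simps l1 l2' mul_plus by (rule ac4)
  qed
qed

lemma sparse:
  assumes "k2 < k1" "1 \<le> i"
    "ad (mk k1 y) c1 = ad (mk k2 y) c2"
    "ad (mk k1 ((sc^^i) y)) c1 = ad (mk k2 ((sc^^i) y)) c2"
  shows False
proof -
  obtain d where d: "k1 = Suc d + k2" using assms(1) using less_imp_Suc_add[OF assms(1)] by auto
  obtain i' where i: "i = Suc i'" using assms(2) by (cases i) auto
  have e1: "ad (mk (Suc d) y) c1 = c2"
    using assms(3) unfolding d mul_plus ac5 by (rule cancel_l)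
  have e2: "ad (mk (Suc d) ((sc^^i) y)) c1 = c2"
    using assms(4) unfolding d mul_plus ac5 by (rule cancel_l)
  let ?q = "(sc^^i) zr"
  let ?R = "ad (mk d ?q) ((sc^^i') zr)"
  have qe: "mk (Suc d) ?q = sc ?R" using i by simp
  have me: "mk (Suc d) ((sc^^i) y) = ad (mk (Suc d) y) (mk (Suc d) ?q)"
    by (subst sn) (simp only: mul_add)
  have "c2 = ad (ad (mk (Suc d) y) (mk (Suc d) ?q)) c1" using e2 me by simp
  also have "\<dots> = ad (ad (mk (Suc d) y) c1) (mk (Suc d) ?q)" by (rule ac3)
  also have "\<dots> = ad c2 (sc ?R)" unfolding e1 qe ..
  finally show False using nocyc by blast
qed

lemma atom_sparse:
  "\<exists>N v. \<forall>y i. 1 \<le> i \<longrightarrow>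
     (eval M (e(x := (sc^^N) y)) t = eval M (e(x := (sc^^N) y)) u) = v \<or>
     (eval M (e(x := (sc^^N) ((sc^^i) y))) t = eval M (e(x := (sc^^N) ((sc^^i) y))) u) = v"
proof -
  obtain N1 k1 c1 where h1: "\<forall>y. eval M (e(x := (sc^^N1) y)) t = ad (mk k1 y) c1" using nf by blast
  obtain N2 k2 c2 where h2: "\<forall>y. eval M (e(x := (sc^^N2) y)) u = ad (mk k2 y) c2" using nf by blast
  note l1 = lift[where f="\<lambda>z. eval M (e(x:=z)) t", OF h1, of N2, rule_format]
  note l2 = lift[where f="\<lambda>z. eval M (e(x:=z)) u", OF h2, of N1, rule_format]
  define d1 where "d1 = ad (mk k1 ((sc ^^ N2) zr)) c1"
  define d2 where "d2 = ad (mk k2 ((sc ^^ N1) zr)) c2"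
  have L1: "eval M (e(x := (sc^^(N1+N2)) y)) t = ad (mk k1 y) d1" for y
    using l1 d1_def by simp
  have L2: "eval M (e(x := (sc^^(N1+N2)) y)) u = ad (mk k2 y) d2" for y
    using l2 d2_def by (simp add: add.commute[of N1 N2])
  show ?thesis
  proof (cases "k1 = k2")
    case True
    show ?thesis
      apply (intro exI[of _ "N1+N2"] exI[of _ "d1 = d2"] allI impI disjI1)
      unfolding L1 L2 True using cancel_l by blast
  next
    case False
    show ?thesis
    proof (rule exI[of _ "N1+N2"], rule exI[of _ False], intro allI impI)
      fix y and i :: nat
      assume i: "1 \<le> i"
      have "\<not> (ad (mk k1 y) d1 = ad (mk k2 y) d2 \<and>
               ad (mk k1 ((sc^^i) y)) d1 = ad (mk k2 ((sc^^i) y)) d2)"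
      proof
        assume h: "ad (mk k1 y) d1 = ad (mk k2 y) d2 \<and>
               ad (mk k1 ((sc^^i) y)) d1 = ad (mk k2 ((sc^^i) y)) d2"
        consider "k2 < k1" | "k1 < k2" using False by linarith
        then show False
        proof cases
          case 1
          then show False using sparse[of k2 k1 i y d1 d2, OF 1 i] h by blast
        next
          case 2
          then show False using sparse[of k1 k2 i y d2 d1, OF 2 i] h by metis
        qed
      qed
      then show "(eval M (e(x := (sc ^^ (N1+N2)) y)) t = eval M (e(x := (sc ^^ (N1+N2)) y)) u) = False \<or>
          (eval M (e(x := (sc ^^ (N1+N2)) ((sc ^^ i) y))) t =
           eval M (e(x := (sc ^^ (N1+N2)) ((sc ^^ i) y))) u) = False"
        unfolding L1 L2 by blast
    qed
  qed
qed

lemma chain: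
  assumes nz: "\<forall>m. (pr^^m) a \<noteq> zr"
  shows "(sc^^i) ((pr^^(m+i)) a) = (pr^^m) a"
proof (induction i)
  case 0
  then show ?case by simp
next
  case (Suc i)
  let ?b = "(pr^^(m+i)) a"
  have "?b \<noteq> zr" using nz by blast
  then have sb: "sc (pr ?b) = ?b" using zs by metis
  have p1: "(pr^^(m + Suc i)) a = pr ?b" by (simp only: add_Suc_right funpow.simps(2) o_apply)
  have "(sc^^(Suc i)) ((pr^^(m + Suc i)) a) = (sc^^i) (sc (pr ?b))"
    unfolding p1 by (simp only: funpow_Suc_right o_apply)
  also have "\<dots> = (pr^^m) a" using sb Suc.IH by simp
  finally show ?case .
qed

lemma gen:
  assumes sp: "\<forall>y i. 1 \<le> i \<longrightarrow> E ((sc^^N) y) = v \<or> E ((sc^^N) ((sc^^i) y)) = v"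
    and nz: "\<forall>m. (pr^^m) a \<noteq> zr"
  shows "\<exists>J. \<forall>j\<ge>J. E ((pr^^j) a) = v \<and> E ((sc^^j) zr) = v"
proof -
  have "\<forall>j j'. j < j' \<longrightarrow> E ((pr^^j) a) = v \<or> E ((pr^^j') a) = v"
  proof (intro allI impI)
    fix j j' :: nat
    assume jj: "j < j'"
    let ?y = "(pr^^(j'+N)) a"
    have c1: "(sc^^N) ?y = (pr^^j') a" using chain[OF nz, of N j'] by simp
    have jn: "j'+N = j + (j'-j+N)" using jj by simp
    have "(sc^^N) ((sc^^(j'-j)) ?y) = (sc^^(j'-j+N)) ?y"
      by (metis funpow_add add.commute comp_apply)
    also have "\<dots> = (sc^^(j'-j+N)) ((pr^^(j + (j'-j+N))) a)" by (subst jn) (rule refl)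
    also have "\<dots> = (pr^^j) a" by (rule chain[OF nz])
    finally have c2: "(sc^^N) ((sc^^(j'-j)) ?y) = (pr^^j) a" .
    have "1 \<le> j' - j" using jj by simp
    then show "E ((pr^^j) a) = v \<or> E ((pr^^j') a) = v" using sp c1 c2 by metis
  qed
  then obtain J1 where J1: "\<forall>j\<ge>J1. E ((pr^^j) a) = v"
    using bool_seq[where B="\<lambda>j. E ((pr^^j) a)"] by blast
  have "\<forall>j j'. j < j' \<longrightarrow> E ((sc^^(N+j)) zr) = v \<or> E ((sc^^(N+j')) zr) = v"
  proof (intro allI impI)
    fix j j' :: nat
    assume jj: "j < j'"
    let ?y = "(sc^^j) zr"
    have c1: "(sc^^N) ?y = (sc^^(N+j)) zr" by (simp add: funpow_add)
    have jn2: "N + j' = N + ((j'-j) + j)" using jj by simp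
    have c2: "(sc^^N) ((sc^^(j'-j)) ?y) = (sc^^(N+j')) zr"
      unfolding jn2 funpow_add comp_apply by (rule refl)
    have "1 \<le> j' - j" using jj by simp
    then show "E ((sc^^(N+j)) zr) = v \<or> E ((sc^^(N+j')) zr) = v" using sp c1 c2 by metis
  qed
  then obtain J2 where J2: "\<forall>j\<ge>J2. E ((sc^^(N+j)) zr) = v"
    using bool_seq[where B="\<lambda>j. E ((sc^^(N+j)) zr)"] by blast
  have "\<forall>j\<ge>max J1 (J2+N). E ((pr^^j) a) = v \<and> E ((sc^^j) zr) = v"
  proof (intro allI impI)
    fix j assume "max J1 (J2+N) \<le> j"
    then have "J1 \<le> j" "J2 \<le> j - N" "j = N + (j - N)" by auto
    then show "E ((pr^^j) a) = v \<and> E ((sc^^j) zr) = v" using J1 J2 by metis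
  qed
  then show ?thesis by blast
qed

lemma fmla:
  assumes "is_open g" and nz: "\<forall>m. (pr^^m) a \<noteq> zr"
  shows "\<exists>J. \<forall>j\<ge>J. sat M (e(x:=(pr^^j) a)) g = sat M (e(x:=(sc^^j) zr)) g"
  using assms(1)
proof (induction g)
  case (Eq t u)
  obtain N v where "\<forall>y i. 1 \<le> i \<longrightarrow>
     (eval M (e(x := (sc^^N) y)) t = eval M (e(x := (sc^^N) y)) u) = v \<or>
     (eval M (e(x := (sc^^N) ((sc^^i) y))) t = eval M (e(x := (sc^^N) ((sc^^i) y))) u) = v"
    using atom_sparse[where e=e and x=x and t=t and u=u] by blast
  from gen[where E="\<lambda>z. eval M (e(x := z)) t = eval M (e(x := z)) u", OF this nz]
  obtain J where H: "\<forall>j\<ge>J. (eval M (e(x := (pr^^j) a)) t = eval M (e(x := (pr^^j) a)) u) = v \<and>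
     (eval M (e(x := (sc^^j) zr)) t = eval M (e(x := (sc^^j) zr)) u) = v" by blast
  have "\<forall>j\<ge>J. sat M (e(x := (pr^^j) a)) (Eq t u) = sat M (e(x := (sc^^j) zr)) (Eq t u)"
    unfolding sat.simps using H by blast
  then show ?case by blast
next
  case (Neg g)
  then have "is_open g" by simp
  with Neg.IH obtain J where H: "\<forall>j\<ge>J. sat M (e(x:=(pr^^j) a)) g = sat M (e(x:=(sc^^j) zr)) g"
    by blast
  have "\<forall>j\<ge>J. sat M (e(x := (pr^^j) a)) (Neg g) = sat M (e(x := (sc^^j) zr)) (Neg g)"
    unfolding sat.simps using H by blast
  then show ?case by blast
next
  case (Conj g1 g2)
  then have "is_open g1" "is_open g2" by simp_all
  with Conj.IH obtain J1 J2 where H1: "\<forall>j\<ge>J1. sat M (e(x:=(pr^^j) a)) g1 = sat M (e(x:=(sc^^j) zr)) g1"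
    and H2: "\<forall>j\<ge>J2. sat M (e(x:=(pr^^j) a)) g2 = sat M (e(x:=(sc^^j) zr)) g2" by blast
  have "\<forall>j\<ge>max J1 J2. sat M (e(x:=(pr^^j) a)) (Conj g1 g2) = sat M (e(x:=(sc^^j) zr)) (Conj g1 g2)"
    unfolding sat.simps using H1 H2 by (meson max.boundedE)
  then show ?case by blast
next
  case (Disj g1 g2)
  then have "is_open g1" "is_open g2" by simp_all
  with Disj.IH obtain J1 J2 where H1: "\<forall>j\<ge>J1. sat M (e(x:=(pr^^j) a)) g1 = sat M (e(x:=(sc^^j) zr)) g1"
    and H2: "\<forall>j\<ge>J2. sat M (e(x:=(pr^^j) a)) g2 = sat M (e(x:=(sc^^j) zr)) g2" by blast
  have "\<forall>j\<ge>max J1 J2. sat M (e(x:=(pr^^j) a)) (Disj g1 g2) = sat M (e(x:=(sc^^j) zr)) (Disj g1 g2)"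
    unfolding sat.simps using H1 H2 by (meson max.boundedE)
  then show ?case by blast
next
  case (Imp g1 g2)
  then have "is_open g1" "is_open g2" by simp_all
  with Imp.IH obtain J1 J2 where H1: "\<forall>j\<ge>J1. sat M (e(x:=(pr^^j) a)) g1 = sat M (e(x:=(sc^^j) zr)) g1"
    and H2: "\<forall>j\<ge>J2. sat M (e(x:=(pr^^j) a)) g2 = sat M (e(x:=(sc^^j) zr)) g2" by blast
  have "\<forall>j\<ge>max J1 J2. sat M (e(x:=(pr^^j) a)) (Imp g1 g2) = sat M (e(x:=(sc^^j) zr)) (Imp g1 g2)"
    unfolding sat.simps using H1 H2 by (meson max.boundedE)
  then show ?case by blast
next
  case (All y g)
  then show ?case by simp
next
  case (Ex y g)
  then show ?case by simp
qed

lemma pr_zero_std: "(pr^^m) a = zr \<Longrightarrow> \<exists>i. a = (sc^^i) zr"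
proof (induction m arbitrary: a)
  case 0
  then show ?case by (metis funpow_0)
next
  case (Suc m)
  have "(pr^^m) (pr a) = zr" using Suc.prems by (simp only: funpow_Suc_right o_apply)
  then obtain i where i: "pr a = (sc^^i) zr" using Suc.IH by blast
  show ?case
  proof (cases "a = zr")
    case True
    then show ?thesis by (metis funpow_0)
  next
    case False
    then have "a = sc (pr a)" using zs by metis
    then have "a = (sc^^(Suc i)) zr" using i by simp
    then show ?thesis by blast
  qed
qed

lemma open_ind:
  assumes g: "is_open g" and base: "sat M (e(x:=zr)) g"
    and step: "\<And>b. sat M (e(x:=b)) g \<Longrightarrow> sat M (e(x:=sc b)) g"
  shows "sat M (e(x:=a)) g"
proof -
  have std: "sat M (e(x:=(sc^^j) zr)) g" for j
  proof (induction j)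
    case 0
    show ?case using base by (simp only: funpow_0)
  next
    case (Suc j)
    have "(sc^^(Suc j)) zr = sc ((sc^^j) zr)" by (simp only: funpow.simps(2) o_apply)
    then show ?case using step[OF Suc.IH] by (simp only:)
  qed
  have clo: "sat M (e(x:=(sc^^i) b)) g" if hb: "sat M (e(x:=b)) g" for i b
  proof (induction i)
    case 0
    show ?case using hb by (simp only: funpow_0)
  next
    case (Suc i)
    have "(sc^^(Suc i)) b = sc ((sc^^i) b)" by (simp only: funpow.simps(2) o_apply)
    then show ?case using step[OF Suc.IH] by (simp only:)
  qed
  show ?thesis
  proof (cases "\<exists>m. (pr^^m) a = zr")
    case True
    then obtain m where "(pr^^m) a = zr" by blast
    then obtain i where "a = (sc^^i) zr" using pr_zero_std by blast
    then show ?thesis using std by simp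
  next
    case False
    then have nz: "\<forall>m. (pr^^m) a \<noteq> zr" by blast
    obtain J where "\<forall>j\<ge>J. sat M (e(x:=(pr^^j) a)) g = sat M (e(x:=(sc^^j) zr)) g"
      using fmla[OF g nz] by blast
    then have "sat M (e(x:=(pr^^J) a)) g" using std by blast
    then have "sat M (e(x:=(sc^^J) ((pr^^(0+J)) a))) g" using clo by simp
    then show ?thesis using chain[OF nz, of J 0] by simp
  qed
qed
end


theorem proposition16:
  shows "(\<forall>f \<in> T \<union> IND Open. entails TYPE('a) (T \<union> IND Literal) f)
       \<and> (\<forall>f \<in> T \<union> IND Literal. entails TYPE('a) (T \<union> IND Open) f)"
proof (intro conjI ballI)
  fix f assume f: "f \<in> T \<union> IND Open"
  show "entails TYPE('a) (T \<union> IND Literal) f"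
    unfolding entails_def
  proof (intro allI impI)
    fix M :: "'a struct"
    assume mM: "is_model M (T \<union> IND Literal)"
    interpret lm M by unfold_locales (rule mM)
    show "valid_in M f"
    proof (cases "f \<in> T")
      case True
      then show ?thesis using vT by blast
    next
      case False
      then obtain x g where fg: "f = Ind x g" and g: "is_open g"
        using f unfolding IND_def Open_def by auto
      show ?thesis
        unfolding valid_in_def fg
      proof
        fix e
        show "sat M e (Ind x g)"
          unfolding Ind_def using open_ind[OF g, of e x] by (simp add: sat_subst g)
      qed
    qed
  qed
next
  fix f assume f: "f \<in> T \<union> IND Literal"
  have sub: "IND Literal \<subseteq> IND Open"
  proof
    fix h assume "h \<in> IND Literal"
    then obtain x g where "h = Ind x g" and lg: "is_literal g" unfolding IND_def Literal_def by blast
    moreover have "is_open g" using lg by (cases rule: is_literal.cases) auto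
    ultimately show "h \<in> IND Open" unfolding IND_def Open_def by blast
  qed
  show "entails TYPE('a) (T \<union> IND Open) f"
    unfolding entails_def is_model_def using f sub by blast
qed

end
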